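(* If $\mathcal{M}_\times\perp\Sigma$ and $\mathcal{M}_\Sigma\perp E$, then $\mathcal{M}_\times\perp\mathsf{L}E$.
   Context: $\mathcal{E}$ is a locally cartesian closed category with a dominance: a class of monos (the $\Sigma$-monos) closed under pullback, identities and composition, classified by $\top:1\to\Sigma$ (each $\Sigma$-mono $U\to A$ is the pullback of $\top$ along a unique $A\to\Sigma$). $\mathsf{L}E=\sum_{\phi:\Sigma}E^{\phi}$ is the associated partial map classifier: maps $X\to\mathsf{L}E$ correspond to pairs of a $\Sigma$-mono $U\to X$ and a map $U\to E$. For a mono $m:I\to J$ and an object $E$, $m\perp E$ means every map $I\to E$ extends uniquely along $m$ to a map $J\to E$; for a class $\mathcal{N}$, $\mathcal{N}\perp E$ means $m\perp E$ for all $m\in\mathcal{N}$. Given a class $\mathcal{M}$ of monos, $\mathcal{M}_\times$ is the smallest class of monos containing $\mathcal{M}$ and stable under products (with arbitrary objects), and $\mathcal{M}_\Sigma$ is the smallest class of monos containing $\mathcal{M}_\times$ and stable under pullback along $\Sigma$-monos. *)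

theory Defs
  imports Main
begin

text \<open>A category is given by a set of objects, a set of arrows, source, target,
  composition (cmp C g f = g after f, defined when src g = trg f) and identities.\<close>

record ('o, 'a) cat =
  obj :: "'o set"
  arr :: "'a set"
  src :: "'a \<Rightarrow> 'o"
  trg :: "'a \<Rightarrow> 'o"
  cmp :: "'a \<Rightarrow> 'a \<Rightarrow> 'a"
  idt :: "'o \<Rightarrow> 'a"

definition hom :: "('o, 'a) cat \<Rightarrow> 'o \<Rightarrow> 'o \<Rightarrow> 'a set" where
  "hom C X Y = {f \<in> arr C. src C f = X \<and> trg C f = Y}"

definition category :: "('o, 'a) cat \<Rightarrow> bool" where
  "category C \<longleftrightarrow>
     (\<forall>f \<in> arr C. src C f \<in> obj C \<and> trg C f \<in> obj C) \<and>
     (\<forall>X \<in> obj C. idt C X \<in> hom C X X) \<and>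
     (\<forall>f \<in> arr C. \<forall>g \<in> arr C. src C g = trg C f \<longrightarrow>
        cmp C g f \<in> hom C (src C f) (trg C g)) \<and>
     (\<forall>f \<in> arr C. cmp C f (idt C (src C f)) = f \<and> cmp C (idt C (trg C f)) f = f) \<and>
     (\<forall>f \<in> arr C. \<forall>g \<in> arr C. \<forall>h \<in> arr C.
        src C g = trg C f \<longrightarrow> src C h = trg C g \<longrightarrow>
        cmp C h (cmp C g f) = cmp C (cmp C h g) f)"

definition is_mono :: "('o, 'a) cat \<Rightarrow> 'a \<Rightarrow> bool" where
  "is_mono C m \<longleftrightarrow> m \<in> arr C \<and>
     (\<forall>g \<in> arr C. \<forall>h \<in> arr C. trg C g = src C m \<longrightarrow> trg C h = src C m \<longrightarrow>
        src C g = src C h \<longrightarrow> cmp C m g = cmp C m h \<longrightarrow> g = h)"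

definition terminal :: "('o, 'a) cat \<Rightarrow> 'o \<Rightarrow> bool" where
  "terminal C T \<longleftrightarrow> T \<in> obj C \<and> (\<forall>X \<in> obj C. \<exists>!t. t \<in> hom C X T)"

definition is_pullback :: "('o, 'a) cat \<Rightarrow> 'a \<Rightarrow> 'a \<Rightarrow> 'a \<Rightarrow> 'a \<Rightarrow> bool" where
  "is_pullback C f g p q \<longleftrightarrow>
     f \<in> arr C \<and> g \<in> arr C \<and> p \<in> arr C \<and> q \<in> arr C \<and>
     trg C f = trg C g \<and> trg C p = src C f \<and> trg C q = src C g \<and> src C p = src C q \<and>
     cmp C f p = cmp C g q \<and>
     (\<forall>p' \<in> arr C. \<forall>q' \<in> arr C.
        trg C p' = src C f \<longrightarrow> trg C q' = src C g \<longrightarrow> src C p' = src C q' \<longrightarrow>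
        cmp C f p' = cmp C g q' \<longrightarrow>
        (\<exists>!u. u \<in> hom C (src C p') (src C p) \<and> cmp C p u = p' \<and> cmp C q u = q'))"

definition is_product :: "('o, 'a) cat \<Rightarrow> 'o \<Rightarrow> 'o \<Rightarrow> 'o \<Rightarrow> 'a \<Rightarrow> 'a \<Rightarrow> bool" where
  "is_product C A B P p1 p2 \<longleftrightarrow>
     P \<in> obj C \<and> p1 \<in> hom C P A \<and> p2 \<in> hom C P B \<and>
     (\<forall>Y \<in> obj C. \<forall>f1 \<in> hom C Y A. \<forall>f2 \<in> hom C Y B.
        \<exists>!u. u \<in> hom C Y P \<and> cmp C p1 u = f1 \<and> cmp C p2 u = f2)"

definition has_pullbacks :: "('o, 'a) cat \<Rightarrow> bool" where
  "has_pullbacks C \<longleftrightarrow> (\<forall>f \<in> arr C. \<forall>g \<in> arr C. trg C f = trg C g \<longrightarrow>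
     (\<exists>p q. is_pullback C f g p q))"

text \<open>Dependent products: for every f : A \<rightarrow> B the pullback functor
  f^* : C/B \<rightarrow> C/A has a right adjoint \<Pi>_f.  Given g : X \<rightarrow> A, the object
  p : \<Pi> \<rightarrow> B together with the counit ev : f^*\<Pi> \<rightarrow> X over A is universal.\<close>

definition has_dependent_products :: "('o, 'a) cat \<Rightarrow> bool" where
  "has_dependent_products C \<longleftrightarrow>
    (\<forall>f \<in> arr C. \<forall>g \<in> arr C. trg C g = src C f \<longrightarrow>
      (\<exists>p q1 q2 ev.
         p \<in> arr C \<and> trg C p = trg C f \<and>
         is_pullback C f p q1 q2 \<and>
         ev \<in> hom C (src C q1) (src C g) \<and> cmp C g ev = q1 \<and>
         (\<forall>h \<in> arr C. \<forall>z1 z2 k. trg C h = trg C f \<longrightarrow> is_pullback C f h z1 z2 \<longrightarrow>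
            k \<in> hom C (src C z1) (src C g) \<longrightarrow> cmp C g k = z1 \<longrightarrow>
            (\<exists>!u. u \<in> hom C (src C h) (src C p) \<and> cmp C p u = h \<and>
               (\<forall>w. w \<in> hom C (src C z1) (src C q1) \<longrightarrow> cmp C q1 w = z1 \<longrightarrow>
                    cmp C q2 w = cmp C u z2 \<longrightarrow> cmp C ev w = k)))))"

definition lccc :: "('o, 'a) cat \<Rightarrow> bool" where
  "lccc C \<longleftrightarrow> category C \<and> (\<exists>T. terminal C T) \<and> has_pullbacks C \<and>
     has_dependent_products C"

text \<open>D is the class of \<Sigma>-monos; it is classified by tp : 1 \<rightarrow> Sig: an arrow is a
  \<Sigma>-mono iff it is the pullback of tp along a unique arrow into Sig.\<close>

definition dominance :: "('o, 'a) cat \<Rightarrow> 'a set \<Rightarrow> 'o \<Rightarrow> 'a \<Rightarrow> 'o \<Rightarrow> bool" where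
  "dominance C D one tp Sig \<longleftrightarrow>
     terminal C one \<and> Sig \<in> obj C \<and> tp \<in> hom C one Sig \<and>
     (\<forall>m \<in> D. is_mono C m) \<and>
     (\<forall>X \<in> obj C. idt C X \<in> D) \<and>
     (\<forall>m \<in> D. \<forall>n \<in> D. src C n = trg C m \<longrightarrow> cmp C n m \<in> D) \<and>
     (\<forall>m \<in> D. \<forall>g p q. is_pullback C m g p q \<longrightarrow> q \<in> D) \<and>
     (\<forall>m. m \<in> D \<longleftrightarrow> m \<in> arr C \<and>
        (\<exists>!\<chi>. \<chi> \<in> hom C (trg C m) Sig \<and> (\<exists>t. is_pullback C \<chi> tp m t)))"

definition partial_map_classifier ::
  "('o, 'a) cat \<Rightarrow> 'a set \<Rightarrow> 'o \<Rightarrow> 'o \<Rightarrow> 'a \<Rightarrow> bool" where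
  "partial_map_classifier C D E LE eta \<longleftrightarrow>
     E \<in> obj C \<and> LE \<in> obj C \<and> eta \<in> hom C E LE \<and> eta \<in> D \<and>
     (\<forall>m \<in> D. \<forall>f \<in> hom C (src C m) E.
        \<exists>!g. g \<in> hom C (trg C m) LE \<and> is_pullback C g eta m f)"

definition orth :: "('o, 'a) cat \<Rightarrow> 'a \<Rightarrow> 'o \<Rightarrow> bool" where
  "orth C m E \<longleftrightarrow> (\<forall>f \<in> hom C (src C m) E.
      \<exists>!g. g \<in> hom C (trg C m) E \<and> cmp C g m = f)"

definition orth_class :: "('o, 'a) cat \<Rightarrow> 'a set \<Rightarrow> 'o \<Rightarrow> bool" where
  "orth_class C N E \<longleftrightarrow> (\<forall>m \<in> N. orth C m E)"

text \<open>M_times: smallest class containing M and stable under products m \<times> X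
  (for any choice of the products involved).\<close>

inductive_set Mtimes :: "('o, 'a) cat \<Rightarrow> 'a set \<Rightarrow> 'a set" for C M where
  base: "m \<in> M \<Longrightarrow> m \<in> Mtimes C M"
| prod: "\<lbrakk> m \<in> Mtimes C M; X \<in> obj C;
           is_product C (src C m) X P p1 p2; is_product C (trg C m) X Q q1 q2;
           u \<in> hom C P Q; cmp C q1 u = cmp C m p1; cmp C q2 u = p2 \<rbrakk>
         \<Longrightarrow> u \<in> Mtimes C M"

inductive_set MSigma :: "('o, 'a) cat \<Rightarrow> 'a set \<Rightarrow> 'a set \<Rightarrow> 'a set" for C D M where
  base: "m \<in> Mtimes C M \<Longrightarrow> m \<in> MSigma C D M"
| pb: "\<lbrakk> m \<in> MSigma C D M; u \<in> D; is_pullback C m u p q \<rbrakk> \<Longrightarrow> q \<in> MSigma C D M"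

end

theory Submission
  imports Defs
begin

lemma cat_cmp:
  assumes "category C" "f \<in> arr C" "g \<in> arr C" "src C g = trg C f"
  shows "cmp C g f \<in> arr C" "src C (cmp C g f) = src C f" "trg C (cmp C g f) = trg C g"
  using assms unfolding category_def hom_def by blast+

lemma cat_assoc:
  assumes "category C" "f \<in> arr C" "g \<in> arr C" "h \<in> arr C"
    "src C g = trg C f" "src C h = trg C g"
  shows "cmp C h (cmp C g f) = cmp C (cmp C h g) f"
  using assms unfolding category_def by blast

lemma ex1_eq: "\<exists>!x. P x \<Longrightarrow> P a \<Longrightarrow> P b \<Longrightarrow> a = b"
  by blast

lemma pb_sym: "is_pullback C f g p q \<Longrightarrow> is_pullback C g f q p"
  unfolding is_pullback_def by metis

lemma pb_paste:
  assumes C: "category C"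
    and R: "is_pullback C f g p q" and L: "is_pullback C h p r s"
  shows "is_pullback C (cmp C f h) g r (cmp C q s)"
proof -
  note cc = cat_cmp[OF C] cat_assoc[OF C]
  have ar: "f \<in> arr C" "g \<in> arr C" "p \<in> arr C" "q \<in> arr C" "h \<in> arr C" "r \<in> arr C" "s \<in> arr C"
    and ty: "trg C f = trg C g" "trg C p = src C f" "trg C q = src C g" "src C p = src C q"
       "trg C h = trg C p" "trg C r = src C h" "trg C s = src C p" "src C r = src C s"
    and eq: "cmp C f p = cmp C g q" "cmp C h r = cmp C p s"
    using R L unfolding is_pullback_def by auto
  have UR: "\<And>p' q'. p' \<in> arr C \<Longrightarrow> q' \<in> arr C \<Longrightarrow> trg C p' = src C f \<Longrightarrow> trg C q' = src C g \<Longrightarrow>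
     src C p' = src C q' \<Longrightarrow> cmp C f p' = cmp C g q' \<Longrightarrow>
     (\<exists>!u. u \<in> hom C (src C p') (src C p) \<and> cmp C p u = p' \<and> cmp C q u = q')"
    using R unfolding is_pullback_def by blast
  have UL: "\<And>p' q'. p' \<in> arr C \<Longrightarrow> q' \<in> arr C \<Longrightarrow> trg C p' = src C h \<Longrightarrow> trg C q' = src C p \<Longrightarrow>
     src C p' = src C q' \<Longrightarrow> cmp C h p' = cmp C p q' \<Longrightarrow>
     (\<exists>!u. u \<in> hom C (src C p') (src C r) \<and> cmp C r u = p' \<and> cmp C s u = q')"
    using L unfolding is_pullback_def by blast
  have outer: "cmp C (cmp C f h) r = cmp C g (cmp C q s)"
  proof -
    have "cmp C (cmp C f h) r = cmp C f (cmp C h r)" using ar ty by (simp add: cc)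
    also have "\<dots> = cmp C f (cmp C p s)" using eq by simp
    also have "\<dots> = cmp C (cmp C f p) s" using ar ty by (simp add: cc)
    also have "\<dots> = cmp C (cmp C g q) s" using eq by simp
    also have "\<dots> = cmp C g (cmp C q s)" using ar ty by (simp add: cc)
    finally show ?thesis .
  qed
  have U: "\<forall>p' \<in> arr C. \<forall>q' \<in> arr C.
        trg C p' = src C (cmp C f h) \<longrightarrow> trg C q' = src C g \<longrightarrow> src C p' = src C q' \<longrightarrow>
        cmp C (cmp C f h) p' = cmp C g q' \<longrightarrow>
        (\<exists>!u. u \<in> hom C (src C p') (src C r) \<and> cmp C r u = p' \<and> cmp C (cmp C q s) u = q')"
  proof (intro ballI impI)
    fix p' q'
    assume a: "p' \<in> arr C" "q' \<in> arr C" "trg C p' = src C (cmp C f h)" "trg C q' = src C g"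
      "src C p' = src C q'" "cmp C (cmp C f h) p' = cmp C g q'"
    have a3: "trg C p' = src C h" using a(3) ar ty by (simp add: cc)
    have hp: "cmp C h p' \<in> arr C" "trg C (cmp C h p') = src C f" "src C (cmp C h p') = src C p'"
      using ar ty a3 a by (simp_all add: cc)
    have fhp: "cmp C f (cmp C h p') = cmp C g q'" using a(6) a(1) a3 ar ty by (simp add: cc)
    have ex1: "\<exists>!u. u \<in> hom C (src C p') (src C p) \<and> cmp C p u = cmp C h p' \<and> cmp C q u = q'"
      using UR[OF hp(1) a(2) hp(2) a(4)] hp(3) a(5) fhp by simp
    then obtain u1 where u1: "u1 \<in> hom C (src C p') (src C p)" "cmp C p u1 = cmp C h p'" "cmp C q u1 = q'"
      by blast
    have u1a: "u1 \<in> arr C" "src C u1 = src C p'" "trg C u1 = src C p" using u1 unfolding hom_def by auto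
    have ex2: "\<exists>!u. u \<in> hom C (src C p') (src C r) \<and> cmp C r u = p' \<and> cmp C s u = u1"
      using UL[OF a(1) u1a(1) a3 u1a(3)] u1a(2) u1(2) by simp
    then obtain u where u: "u \<in> hom C (src C p') (src C r)" "cmp C r u = p'" "cmp C s u = u1"
      by blast
    have ua: "u \<in> arr C" "src C u = src C p'" "trg C u = src C r" using u unfolding hom_def by auto
    show "\<exists>!u. u \<in> hom C (src C p') (src C r) \<and> cmp C r u = p' \<and> cmp C (cmp C q s) u = q'"
    proof (rule ex1I[where a=u])
      have "cmp C (cmp C q s) u = cmp C q (cmp C s u)" using ar ty ua by (simp add: cc)
      then show "u \<in> hom C (src C p') (src C r) \<and> cmp C r u = p' \<and> cmp C (cmp C q s) u = q'"
        using u u1 by simp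
    next
      fix u'
      assume b: "u' \<in> hom C (src C p') (src C r) \<and> cmp C r u' = p' \<and> cmp C (cmp C q s) u' = q'"
      have ub: "u' \<in> arr C" "src C u' = src C p'" "trg C u' = src C r" using b unfolding hom_def by auto
      have su: "cmp C s u' \<in> hom C (src C p') (src C p)"
        using ar ty ub unfolding hom_def by (simp add: cc)
      have "cmp C p (cmp C s u') = cmp C (cmp C p s) u'" using ar ty ub by (simp add: cc)
      also have "\<dots> = cmp C (cmp C h r) u'" using eq by simp
      also have "\<dots> = cmp C h (cmp C r u')" using ar ty ub by (simp add: cc)
      also have "\<dots> = cmp C h p'" using b by simp
      finally have e1: "cmp C p (cmp C s u') = cmp C h p'" .
      have e2: "cmp C q (cmp C s u') = q'" using ar ty ub b by (simp add: cc)
      have "cmp C s u' = u1"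
        using ex1 su u1 e1 e2 by blast
      then show "u' = u"
        using ex2 u b by blast
    qed
  qed
  show ?thesis unfolding is_pullback_def
    using U outer ar ty by (simp add: cc)
qed


lemma pb_cancel:
  assumes C: "category C"
    and R: "is_pullback C f g p q"
    and ar0: "h \<in> arr C" "r \<in> arr C" "s \<in> arr C"
    and ty0: "trg C h = trg C p" "trg C r = src C h" "trg C s = src C p" "src C r = src C s"
    and eq0: "cmp C h r = cmp C p s"
    and O: "is_pullback C (cmp C f h) g r (cmp C q s)"
  shows "is_pullback C h p r s"
proof -
  note cc = cat_cmp[OF C] cat_assoc[OF C]
  have ar: "f \<in> arr C" "g \<in> arr C" "p \<in> arr C" "q \<in> arr C"
    and ty: "trg C f = trg C g" "trg C p = src C f" "trg C q = src C g" "src C p = src C q"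
    and eq: "cmp C f p = cmp C g q"
    using R unfolding is_pullback_def by auto
  have UR: "\<And>p' q'. p' \<in> arr C \<Longrightarrow> q' \<in> arr C \<Longrightarrow> trg C p' = src C f \<Longrightarrow> trg C q' = src C g \<Longrightarrow>
     src C p' = src C q' \<Longrightarrow> cmp C f p' = cmp C g q' \<Longrightarrow>
     (\<exists>!u. u \<in> hom C (src C p') (src C p) \<and> cmp C p u = p' \<and> cmp C q u = q')"
    using R unfolding is_pullback_def by blast
  have UO: "\<And>p' q'. p' \<in> arr C \<Longrightarrow> q' \<in> arr C \<Longrightarrow> trg C p' = src C (cmp C f h) \<Longrightarrow> trg C q' = src C g \<Longrightarrow>
     src C p' = src C q' \<Longrightarrow> cmp C (cmp C f h) p' = cmp C g q' \<Longrightarrow>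
     (\<exists>!u. u \<in> hom C (src C p') (src C r) \<and> cmp C r u = p' \<and> cmp C (cmp C q s) u = q')"
    using O unfolding is_pullback_def by blast
  have U: "\<forall>p' \<in> arr C. \<forall>q' \<in> arr C.
        trg C p' = src C h \<longrightarrow> trg C q' = src C p \<longrightarrow> src C p' = src C q' \<longrightarrow>
        cmp C h p' = cmp C p q' \<longrightarrow>
        (\<exists>!u. u \<in> hom C (src C p') (src C r) \<and> cmp C r u = p' \<and> cmp C s u = q')"
  proof (intro ballI impI)
    fix p' q'
    assume a: "p' \<in> arr C" "q' \<in> arr C" "trg C p' = src C h" "trg C q' = src C p"
      "src C p' = src C q'" "cmp C h p' = cmp C p q'"
    have fh: "cmp C (cmp C f h) p' = cmp C f (cmp C h p')" using a(1-5) ar0 ty0 ar ty by (simp add: cc)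
    also have "\<dots> = cmp C f (cmp C p q')" using a by simp
    also have "\<dots> = cmp C (cmp C f p) q'" using a ar0 ty0 ar ty by (simp add: cc)
    also have "\<dots> = cmp C (cmp C g q) q'" using eq by simp
    also have "\<dots> = cmp C g (cmp C q q')" using a ar0 ty0 ar ty by (simp add: cc)
    finally have fh: "cmp C (cmp C f h) p' = cmp C g (cmp C q q')" .
    have qq: "cmp C q q' \<in> arr C" "trg C (cmp C q q') = src C g" "src C (cmp C q q') = src C q'"
      using a ar ty by (simp_all add: cc)
    have a3: "trg C p' = src C (cmp C f h)" using a ar0 ty0 ar ty by (simp add: cc)
    have ex1: "\<exists>!u. u \<in> hom C (src C p') (src C r) \<and> cmp C r u = p' \<and> cmp C (cmp C q s) u = cmp C q q'"
      using UO[OF a(1) qq(1) a3 qq(2)] qq(3) a(5) fh by simp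
    then obtain u where u: "u \<in> hom C (src C p') (src C r)" "cmp C r u = p'" "cmp C (cmp C q s) u = cmp C q q'"
      by blast
    have ua: "u \<in> arr C" "src C u = src C p'" "trg C u = src C r" using u unfolding hom_def by auto
    have hp: "cmp C h p' \<in> arr C" "trg C (cmp C h p') = src C f" "src C (cmp C h p') = src C p'"
      using a ar0 ty0 ar ty by (simp_all add: cc)
    have "cmp C f (cmp C h p') = cmp C (cmp C f h) p'"
      using a ar0 ty0 ar ty by (intro cat_assoc[OF C]) auto
    with fh have fhp: "cmp C f (cmp C h p') = cmp C g (cmp C q q')" by simp
    have ex2: "\<exists>!u. u \<in> hom C (src C p') (src C p) \<and> cmp C p u = cmp C h p' \<and> cmp C q u = cmp C q q'"
      using UR[OF hp(1) qq(1) hp(2) qq(2)] hp(3) qq(3) a(5) fhp by simp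
    have su: "cmp C s u \<in> hom C (src C p') (src C p)" using ua ar0 ty0 unfolding hom_def by (simp add: cc)
    have "cmp C p (cmp C s u) = cmp C (cmp C p s) u" using ua ar0 ty0 ar ty by (simp add: cc)
    also have "\<dots> = cmp C (cmp C h r) u" using eq0 by simp
    also have "\<dots> = cmp C h (cmp C r u)" using ua ar0 ty0 ar ty by (simp add: cc)
    finally have e1: "cmp C p (cmp C s u) = cmp C h p'" using u by simp
    have e2: "cmp C q (cmp C s u) = cmp C q q'" using u ua ar0 ty0 ar ty by (simp add: cc)
    have q'h: "q' \<in> hom C (src C p') (src C p)" using a unfolding hom_def by simp
    have su_eq: "cmp C s u = q'"
      by (rule ex1_eq[OF ex2]) (use su e1 e2 q'h a(6) in auto)
    show "\<exists>!u. u \<in> hom C (src C p') (src C r) \<and> cmp C r u = p' \<and> cmp C s u = q'"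
    proof (rule ex1I[where a=u])
      show "u \<in> hom C (src C p') (src C r) \<and> cmp C r u = p' \<and> cmp C s u = q'"
        using u su_eq by simp
    next
      fix u'
      assume b: "u' \<in> hom C (src C p') (src C r) \<and> cmp C r u' = p' \<and> cmp C s u' = q'"
      have ub: "u' \<in> arr C" "src C u' = src C p'" "trg C u' = src C r" using b unfolding hom_def by auto
      have "cmp C (cmp C q s) u' = cmp C q (cmp C s u')" using ub ar0 ty0 ar ty by (simp add: cc)
      then have "cmp C (cmp C q s) u' = cmp C q q'" using b by simp
      then show "u' = u" by (intro ex1_eq[OF ex1]) (use u b in auto)
    qed
  qed
  show ?thesis unfolding is_pullback_def
    using U ar0 ty0 eq0 ar ty by simp
qed


lemma Mtimes_arr:
  assumes "\<forall>m \<in> M. is_mono C m" "m \<in> Mtimes C M"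
  shows "m \<in> arr C"
  using assms(2)
proof induction
  case (base m) then show ?case using assms(1) unfolding is_mono_def by blast
next
  case (prod m X P p1 p2 Q q1 q2 u) then show ?case unfolding hom_def by blast
qed

theorem mainTheorem10:
  fixes C :: "('o, 'a) cat" and D M :: "'a set"
    and one Sig E LE :: 'o and tp eta :: 'a
  assumes "lccc C"
    and "dominance C D one tp Sig"
    and "\<forall>m \<in> M. is_mono C m"
    and "partial_map_classifier C D E LE eta"
    and "orth_class C (Mtimes C M) Sig"
    and "orth_class C (MSigma C D M) E"
  shows "orth_class C (Mtimes C M) LE"
proof -
  have C: "category C" and HP: "has_pullbacks C" using assms(1) unfolding lccc_def by auto
  note cc = cat_cmp[OF C] cat_assoc[OF C]
  have tpH: "tp \<in> hom C one Sig" and Dmono: "\<forall>m\<in>D. is_mono C m"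
   and Dpb: "\<And>m g p q. m \<in> D \<Longrightarrow> is_pullback C m g p q \<Longrightarrow> q \<in> D"
   and Dch: "\<And>m. m \<in> D \<longleftrightarrow> m \<in> arr C \<and> (\<exists>!\<chi>. \<chi> \<in> hom C (trg C m) Sig \<and> (\<exists>t. is_pullback C \<chi> tp m t))"
    using assms(2) unfolding dominance_def by blast+
  have etaH: "eta \<in> hom C E LE" and etaD: "eta \<in> D"
    and PMC: "\<And>m f. m \<in> D \<Longrightarrow> f \<in> hom C (src C m) E \<Longrightarrow>
         \<exists>!g. g \<in> hom C (trg C m) LE \<and> is_pullback C g eta m f"
    using assms(4) unfolding partial_map_classifier_def by blast+
  have OS: "\<And>m f. m \<in> Mtimes C M \<Longrightarrow> f \<in> hom C (src C m) Sig \<Longrightarrow>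
        \<exists>!g. g \<in> hom C (trg C m) Sig \<and> cmp C g m = f"
    using assms(5) unfolding orth_class_def orth_def by blast
  have OE: "\<And>m f. m \<in> MSigma C D M \<Longrightarrow> f \<in> hom C (src C m) E \<Longrightarrow>
        \<exists>!g. g \<in> hom C (trg C m) E \<and> cmp C g m = f"
    using assms(6) unfolding orth_class_def orth_def by blast
  have etamono: "is_mono C eta" using Dmono etaD by blast
  have eta_a: "eta \<in> arr C" "src C eta = E" "trg C eta = LE" using etaH unfolding hom_def by auto
  have tp_a: "tp \<in> arr C" "src C tp = one" "trg C tp = Sig" using tpH unfolding hom_def by auto
  obtain \<sigma> tE where \<sigma>H: "\<sigma> \<in> hom C LE Sig" and \<sigma>pb: "is_pullback C \<sigma> tp eta tE"
    using Dch[of eta] etaD eta_a by blast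
  have \<sigma>_a: "\<sigma> \<in> arr C" "src C \<sigma> = LE" "trg C \<sigma> = Sig" using \<sigma>H unfolding hom_def by auto
  show ?thesis unfolding orth_class_def orth_def
  proof (intro ballI)
    fix m f assume m: "m \<in> Mtimes C M" and f: "f \<in> hom C (src C m) LE"
    have mA: "m \<in> arr C" using Mtimes_arr[OF assms(3) m] .
    have f_a: "f \<in> arr C" "src C f = src C m" "trg C f = LE" using f unfolding hom_def by auto
    obtain e u where pb0: "is_pullback C eta f e u" using HP eta_a f_a unfolding has_pullbacks_def by metis
    have uD: "u \<in> D" using Dpb[OF etaD pb0] .
    have pbf: "is_pullback C f eta u e" using pb_sym[OF pb0] .
    have ue: "u \<in> arr C" "e \<in> arr C" "trg C u = src C m" "trg C e = E" "src C u = src C e"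
      "cmp C f u = cmp C eta e"
      using pbf f_a eta_a unfolding is_pullback_def by auto
    have P1: "is_pullback C (cmp C \<sigma> f) tp u (cmp C tE e)" using pb_paste[OF C \<sigma>pb pbf] .
    have tE_a: "tE \<in> arr C" "trg C tE = one" "src C tE = E"
      using \<sigma>pb tp_a eta_a unfolding is_pullback_def by auto
    have \<sigma>fH: "cmp C \<sigma> f \<in> hom C (src C m) Sig" using \<sigma>_a f_a unfolding hom_def by (simp add: cc)
    obtain \<chi> where \<chi>H: "\<chi> \<in> hom C (trg C m) Sig" and \<chi>m: "cmp C \<chi> m = cmp C \<sigma> f"
      using OS[OF m \<sigma>fH] by blast
    have \<chi>_a: "\<chi> \<in> arr C" "src C \<chi> = trg C m" "trg C \<chi> = Sig" using \<chi>H unfolding hom_def by auto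
    obtain v sV where pb\<chi>: "is_pullback C \<chi> tp v sV"
      using HP \<chi>_a tp_a unfolding has_pullbacks_def by metis
    have v_a: "v \<in> arr C" "sV \<in> arr C" "trg C v = trg C m" "trg C sV = one" "src C v = src C sV"
      "cmp C \<chi> v = cmp C tp sV"
      using pb\<chi> \<chi>_a tp_a unfolding is_pullback_def by auto
    have U\<chi>: "\<And>p' q'. p' \<in> arr C \<Longrightarrow> q' \<in> arr C \<Longrightarrow> trg C p' = src C \<chi> \<Longrightarrow> trg C q' = src C tp \<Longrightarrow>
       src C p' = src C q' \<Longrightarrow> cmp C \<chi> p' = cmp C tp q' \<Longrightarrow>
       (\<exists>!u. u \<in> hom C (src C p') (src C v) \<and> cmp C v u = p' \<and> cmp C sV u = q')"
      using pb\<chi> unfolding is_pullback_def by blast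
    have mu: "cmp C m u \<in> arr C" "trg C (cmp C m u) = src C \<chi>" "src C (cmp C m u) = src C u"
      using mA ue \<chi>_a by (simp_all add: cc)
    have te: "cmp C tE e \<in> arr C" "trg C (cmp C tE e) = src C tp" "src C (cmp C tE e) = src C u"
      using tE_a ue tp_a by (simp_all add: cc)
    have P1eq: "cmp C (cmp C \<sigma> f) u = cmp C tp (cmp C tE e)" using P1 unfolding is_pullback_def by blast
    have "cmp C \<chi> (cmp C m u) = cmp C (cmp C \<chi> m) u" using \<chi>_a mA ue by (simp add: cc)
    also have "\<dots> = cmp C tp (cmp C tE e)" using \<chi>m P1eq by simp
    finally have eqw: "cmp C \<chi> (cmp C m u) = cmp C tp (cmp C tE e)" .
    obtain w where wH: "w \<in> hom C (src C u) (src C v)" and vw: "cmp C v w = cmp C m u"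
        and sw: "cmp C sV w = cmp C tE e"
      using U\<chi>[OF mu(1) te(1) mu(2) te(2)] mu(3) te(3) eqw by auto
    have w_a: "w \<in> arr C" "src C w = src C u" "trg C w = src C v" using wH unfolding hom_def by auto
    have P1': "is_pullback C (cmp C \<chi> m) tp u (cmp C sV w)" using P1 \<chi>m sw by simp
    have LW: "is_pullback C m v u w"
      by (rule pb_cancel[OF C pb\<chi> mA ue(1) w_a(1) _ _ _ _ vw[symmetric] P1'])
         (use v_a ue w_a in auto)
    have vD: "v \<in> D"
    proof -
      have "\<exists>!\<chi>'. \<chi>' \<in> hom C (trg C v) Sig \<and> (\<exists>t. is_pullback C \<chi>' tp v t)"
      proof (rule ex1I[where a=\<chi>])
        show "\<chi> \<in> hom C (trg C v) Sig \<and> (\<exists>t. is_pullback C \<chi> tp v t)"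
          using \<chi>H v_a pb\<chi> by auto
      next
        fix \<chi>' assume a: "\<chi>' \<in> hom C (trg C v) Sig \<and> (\<exists>t. is_pullback C \<chi>' tp v t)"
        then obtain t' where pb': "is_pullback C \<chi>' tp v t'" by blast
        have \<chi>'_a: "\<chi>' \<in> arr C" "src C \<chi>' = trg C m" "trg C \<chi>' = Sig" using a v_a unfolding hom_def by auto
        have P2: "is_pullback C (cmp C \<chi>' m) tp u (cmp C t' w)" using pb_paste[OF C pb' LW] .
        have uu: "\<exists>!\<chi>. \<chi> \<in> hom C (trg C u) Sig \<and> (\<exists>t. is_pullback C \<chi> tp u t)"
          using Dch uD by blast
        have "cmp C \<chi>' m = cmp C \<sigma> f"
          by (rule ex1_eq[OF uu]) (use P2 P1 \<sigma>fH \<chi>'_a mA ue in \<open>auto simp: hom_def cc\<close>)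
        then show "\<chi>' = \<chi>"
          by (intro ex1_eq[OF OS[OF m \<sigma>fH]]) (use \<chi>'_a \<chi>H \<chi>m in \<open>auto simp: hom_def\<close>)
      qed
      then show ?thesis using Dch v_a by blast
    qed
    have wMS: "w \<in> MSigma C D M" using MSigma.pb[OF MSigma.base[OF m] vD LW] .
    have eH: "e \<in> hom C (src C w) E" using ue w_a unfolding hom_def by auto
    have OEw: "\<exists>!e'. e' \<in> hom C (trg C w) E \<and> cmp C e' w = e" using OE[OF wMS eH] .
    then obtain e' where e'H: "e' \<in> hom C (src C v) E" and e'w: "cmp C e' w = e"
      using w_a by auto
    have PMCu: "\<exists>!g. g \<in> hom C (trg C u) LE \<and> is_pullback C g eta u e"
      using PMC[OF uD] ue unfolding hom_def by auto
    obtain g where gH: "g \<in> hom C (trg C v) LE" and gpb: "is_pullback C g eta v e'"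
      using PMC[OF vD e'H] by blast
    have PMCv: "\<exists>!g. g \<in> hom C (trg C v) LE \<and> is_pullback C g eta v e'"
      using PMC[OF vD e'H] .
    have g_a: "g \<in> arr C" "src C g = trg C m" "trg C g = LE" using gH v_a unfolding hom_def by auto
    have gm: "cmp C g m = f"
    proof -
      have "is_pullback C (cmp C g m) eta u (cmp C e' w)" using pb_paste[OF C gpb LW] .
      then have "is_pullback C (cmp C g m) eta u e" using e'w by simp
      then show ?thesis
        by (intro ex1_eq[OF PMCu]) (use pbf g_a mA ue f_a in \<open>auto simp: hom_def cc\<close>)
    qed
    have uniq: "g1 = g" if g1H: "g1 \<in> hom C (trg C m) LE" and g1m: "cmp C g1 m = f" for g1
    proof -
      have g1_a: "g1 \<in> arr C" "src C g1 = trg C m" "trg C g1 = LE" using g1H unfolding hom_def by auto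
      have s1H: "cmp C \<sigma> g1 \<in> hom C (trg C m) Sig" using g1_a \<sigma>_a unfolding hom_def by (simp add: cc)
      have "cmp C (cmp C \<sigma> g1) m = cmp C \<sigma> f"
      proof -
        have "cmp C (cmp C \<sigma> g1) m = cmp C \<sigma> (cmp C g1 m)" using g1_a \<sigma>_a mA by (simp add: cc)
        then show ?thesis using g1m by simp
      qed
      then have s1: "cmp C \<sigma> g1 = \<chi>"
        by (intro ex1_eq[OF OS[OF m \<sigma>fH]]) (use s1H \<chi>H \<chi>m in auto)
      have U\<sigma>: "\<And>p' q'. p' \<in> arr C \<Longrightarrow> q' \<in> arr C \<Longrightarrow> trg C p' = src C \<sigma> \<Longrightarrow> trg C q' = src C tp \<Longrightarrow>
         src C p' = src C q' \<Longrightarrow> cmp C \<sigma> p' = cmp C tp q' \<Longrightarrow>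
         (\<exists>!u. u \<in> hom C (src C p') (src C eta) \<and> cmp C eta u = p' \<and> cmp C tE u = q')"
        using \<sigma>pb unfolding is_pullback_def by blast
      have gv: "cmp C g1 v \<in> arr C" "trg C (cmp C g1 v) = src C \<sigma>" "src C (cmp C g1 v) = src C v"
        using g1_a v_a \<sigma>_a by (simp_all add: cc)
      have "cmp C \<sigma> (cmp C g1 v) = cmp C (cmp C \<sigma> g1) v" using g1_a v_a \<sigma>_a by (simp add: cc)
      also have "\<dots> = cmp C tp sV" using s1 v_a by simp
      finally have eq1: "cmp C \<sigma> (cmp C g1 v) = cmp C tp sV" .
      obtain e1 where e1H: "e1 \<in> hom C (src C v) E" and ee1: "cmp C eta e1 = cmp C g1 v"
          and te1: "cmp C tE e1 = sV"
        using U\<sigma>[OF gv(1) v_a(2) gv(2)] gv(3) v_a tp_a eq1 eta_a by auto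
      have e1_a: "e1 \<in> arr C" "src C e1 = src C v" "trg C e1 = E" using e1H unfolding hom_def by auto
      have outer: "is_pullback C (cmp C \<sigma> g1) tp v (cmp C tE e1)" using pb\<chi> s1 te1 by simp
      have pb1: "is_pullback C g1 eta v e1"
        by (rule pb_cancel[OF C \<sigma>pb g1_a(1) v_a(1) e1_a(1) _ _ _ _ ee1[symmetric] outer])
           (use g1_a v_a e1_a eta_a in auto)
      have "cmp C eta (cmp C e1 w) = cmp C (cmp C eta e1) w" using eta_a e1_a w_a by (simp add: cc)
      also have "\<dots> = cmp C (cmp C g1 v) w" using ee1 by simp
      also have "\<dots> = cmp C g1 (cmp C v w)" using g1_a v_a w_a by (simp add: cc)
      also have "\<dots> = cmp C (cmp C g1 m) u" using vw g1_a mA ue by (simp add: cc)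
      also have "\<dots> = cmp C eta e" using g1m ue by simp
      finally have "cmp C eta (cmp C e1 w) = cmp C eta e" .
      then have e1w: "cmp C e1 w = e"
        using etamono e1_a w_a ue eta_a unfolding is_mono_def by (simp add: cc)
      have "e1 = e'"
        by (rule ex1_eq[OF OEw]) (use e1H e1w e'H e'w w_a in auto)
      then show "g1 = g"
        by (intro ex1_eq[OF PMCv]) (use g1H pb1 gH gpb v_a in auto)
    qed
    show "\<exists>!g. g \<in> hom C (trg C m) LE \<and> cmp C g m = f"
      using gH v_a gm uniq by auto
  qed
qed

end
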